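(* Let $\mathbf{k}$ be a field of characteristic zero, $n\ge4$, and $S=(a_1,\dots,a_n)$ with all $a_i$ positive integers. Let $B_S=\mathbf{k}[X_1,\dots,X_n]/\langle X_1^{a_1}+\cdots+X_n^{a_n}\rangle=\mathbf{k}[x_1,\dots,x_n]$ where $x_i$ is the image of $X_i$, let $L=\mathrm{lcm}(S)$ and $(d_1,\dots,d_n)=(L/a_1,\dots,L/a_n)$. Then: (a) $\gcd(d_1,\dots,d_n)=1$ and $\mathrm{type}(d_1,\dots,d_n)=\mathrm{cotype}(a_1,\dots,a_n)$. (b) For each $i\in\{1,\dots,n\}$: $\gcd(d_1,\dots,\widehat{d_i},\dots,d_n)\neq1 \iff \mathrm{lcm}(a_1,\dots,\widehat{a_i},\dots,a_n)\neq\mathrm{lcm}(S)\iff i\in J(S)$. (c) $x_1,\dots,x_n$ are homogeneous prime elements of $B_S$ (with respect to the standard $\mathbb{N}$-grading) and are pairwise non-associates.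
   Context: The standard $\mathbb{N}$-grading of $B_S$ is the unique $\mathbb{N}$-grading in which each $x_i$ is homogeneous of degree $d_i=L/a_i$. For a tuple $T=(t_1,\dots,t_n)$: $T_i$ is $T$ with the $i$-th entry omitted; $J^*(T)=\{i:\gcd(T_i)\neq\gcd(T)\}$, $\mathrm{type}(T)=|J^*(T)|$; $J(T)=\{i: t_i\nmid \mathrm{lcm}(T_i)\}$, $\mathrm{cotype}(T)=|J(T)|$. A hat denotes omission. *)

theory Defs
  imports Main "HOL-Library.Poly_Mapping"
begin

text \<open>A tuple T = (t_1,...,t_n) is represented as a list of length n, indexed 0..n-1.\<close>

definition tgcd :: "nat list \<Rightarrow> nat" where
  "tgcd T = Gcd (set T)"

definition tlcm :: "nat list \<Rightarrow> nat" where
  "tlcm T = Lcm (set T)"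

definition omit :: "nat \<Rightarrow> nat list \<Rightarrow> nat list" where
  "omit i T = take i T @ drop (Suc i) T"

definition Jstar :: "nat list \<Rightarrow> nat set" where
  "Jstar T = {i. i < length T \<and> tgcd (omit i T) \<noteq> tgcd T}"

definition ttype :: "nat list \<Rightarrow> nat" where
  "ttype T = card (Jstar T)"

definition J :: "nat list \<Rightarrow> nat set" where
  "J T = {i. i < length T \<and> \<not> (T ! i dvd tlcm (omit i T))}"

definition cotype :: "nat list \<Rightarrow> nat" where
  "cotype T = card (J T)"

definition dtuple :: "nat list \<Rightarrow> nat list" where
  "dtuple S = map (\<lambda>ai. tlcm S div ai) S"

text \<open>The polynomial ring k[X_0..X_{n-1}] is the subring
  polys_in n of polynomials only involving the variables with index < n.\<close>

type_synonym 'k mpoly = "(nat \<Rightarrow>\<^sub>0 nat) \<Rightarrow>\<^sub>0 'k"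

definition Var :: "nat \<Rightarrow> 'k::comm_semiring_1 mpoly" where
  "Var i = Poly_Mapping.single (Poly_Mapping.single i 1) 1"

definition polys_in :: "nat \<Rightarrow> 'k::comm_semiring_1 mpoly set" where
  "polys_in n = {p. \<forall>m \<in> Poly_Mapping.keys p. Poly_Mapping.keys m \<subseteq> {..<n}}"

definition fermat_poly :: "nat list \<Rightarrow> 'k::comm_semiring_1 mpoly" where
  "fermat_poly S = (\<Sum>i<length S. Var i ^ (S ! i))"

definition in_ideal :: "nat \<Rightarrow> 'k::comm_ring_1 mpoly \<Rightarrow> 'k mpoly \<Rightarrow> bool" where
  "in_ideal n f h \<longleftrightarrow> (\<exists>g \<in> polys_in n. h = f * g)"

text \<open>Divisibility in the quotient ring B = k[X_0..X_{n-1}]/<f>, expressed on representatives: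
  the class of p divides the class of q iff q - p*c lies in <f> for some c.\<close>
definition qdvd :: "nat \<Rightarrow> 'k::comm_ring_1 mpoly \<Rightarrow> 'k mpoly \<Rightarrow> 'k mpoly \<Rightarrow> bool" where
  "qdvd n f p q \<longleftrightarrow> (\<exists>c \<in> polys_in n. in_ideal n f (q - p * c))"

definition qprime :: "nat \<Rightarrow> 'k::comm_ring_1 mpoly \<Rightarrow> 'k mpoly \<Rightarrow> bool" where
  "qprime n f p \<longleftrightarrow> p \<in> polys_in n \<and> \<not> in_ideal n f p \<and> \<not> qdvd n f p 1 \<and>
     (\<forall>a \<in> polys_in n. \<forall>b \<in> polys_in n. qdvd n f p (a * b) \<longrightarrow> qdvd n f p a \<or> qdvd n f p b)"

definition qassoc :: "nat \<Rightarrow> 'k::comm_ring_1 mpoly \<Rightarrow> 'k mpoly \<Rightarrow> 'k mpoly \<Rightarrow> bool" where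
  "qassoc n f p q \<longleftrightarrow> qdvd n f p q \<and> qdvd n f q p"

definition whomog :: "(nat \<Rightarrow> nat) \<Rightarrow> nat \<Rightarrow> 'k::zero mpoly \<Rightarrow> bool" where
  "whomog w D p \<longleftrightarrow> (\<forall>m \<in> Poly_Mapping.keys p. (\<Sum>j \<in> Poly_Mapping.keys m. Poly_Mapping.lookup m j * w j) = D)"

end

theory Submission
  imports Defs "HOL-Computational_Algebra.Computational_Algebra"
begin

definition rhom :: "('a::comm_ring_1 \<Rightarrow> 'b::comm_ring_1) \<Rightarrow> bool" where
  "rhom \<phi> \<longleftrightarrow> (\<forall>x y. \<phi> (x + y) = \<phi> x + \<phi> y) \<and> (\<forall>x y. \<phi> (x * y) = \<phi> x * \<phi> y) \<and> \<phi> 1 = 1"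

lemma rhom_add: "rhom \<phi> \<Longrightarrow> \<phi> (x + y) = \<phi> x + \<phi> y" by (simp add: rhom_def)
lemma rhom_mult: "rhom \<phi> \<Longrightarrow> \<phi> (x * y) = \<phi> x * \<phi> y" by (simp add: rhom_def)
lemma rhom_1: "rhom \<phi> \<Longrightarrow> \<phi> 1 = 1" by (simp add: rhom_def)
lemma rhom_0: "rhom \<phi> \<Longrightarrow> \<phi> 0 = 0"
proof -
  assume h: "rhom \<phi>"
  have "\<phi> (0 + 0) = \<phi> 0 + \<phi> 0" by (rule rhom_add[OF h])
  then show ?thesis by simp
qed
lemma rhom_uminus: "rhom \<phi> \<Longrightarrow> \<phi> (- x) = - \<phi> x"
proof -
  assume h: "rhom \<phi>"
  have "\<phi> (x + - x) = \<phi> x + \<phi> (- x)" by (rule rhom_add[OF h])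
  then show ?thesis using rhom_0[OF h] by (simp add: eq_neg_iff_add_eq_0 add.commute)
qed
lemma rhom_diff: "rhom \<phi> \<Longrightarrow> \<phi> (x - y) = \<phi> x - \<phi> y"
  using rhom_add[of \<phi> x "- y"] rhom_uminus[of \<phi> y] by simp
lemma rhom_power: "rhom \<phi> \<Longrightarrow> \<phi> (x ^ k) = \<phi> x ^ k"
  by (induction k) (simp_all add: rhom_1 rhom_mult)
lemma rhom_sum: "rhom \<phi> \<Longrightarrow> \<phi> (sum f A) = (\<Sum>x\<in>A. \<phi> (f x))"
  by (induction A rule: infinite_finite_induct) (simp_all add: rhom_0 rhom_add)
lemma rhom_prod: "rhom \<phi> \<Longrightarrow> \<phi> (prod f A) = (\<Prod>x\<in>A. \<phi> (f x))"
  by (induction A rule: infinite_finite_induct) (simp_all add: rhom_1 rhom_mult)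
lemma rhom_dvd: "rhom \<phi> \<Longrightarrow> x dvd y \<Longrightarrow> \<phi> x dvd \<phi> y"
  by (metis dvdE dvdI rhom_mult)
lemma rhom_comp: "rhom \<phi> \<Longrightarrow> rhom \<chi> \<Longrightarrow> rhom (\<chi> \<circ> \<phi>)"
  by (simp add: rhom_def)
lemma rhom_id: "rhom id" by (simp add: rhom_def)

lemma pm_sum_single:
  fixes p :: "'a \<Rightarrow>\<^sub>0 'b::comm_monoid_add"
  shows "p = (\<Sum>m\<in>Poly_Mapping.keys p. Poly_Mapping.single m (Poly_Mapping.lookup p m))"
proof (rule poly_mapping_eqI)
  fix k
  have "Poly_Mapping.lookup (\<Sum>m\<in>Poly_Mapping.keys p. Poly_Mapping.single m (Poly_Mapping.lookup p m)) k
     = (\<Sum>m\<in>Poly_Mapping.keys p. (if m = k then Poly_Mapping.lookup p m else 0))"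
    by (simp add: lookup_sum lookup_single when_def)
  also have "\<dots> = Poly_Mapping.lookup p k"
    by (simp add: sum.delta' in_keys_iff)
  finally show "Poly_Mapping.lookup p k = Poly_Mapping.lookup (\<Sum>m\<in>Poly_Mapping.keys p. Poly_Mapping.single m (Poly_Mapping.lookup p m)) k"
    by simp
qed

lemma pm_induct:
  fixes p :: "'a \<Rightarrow>\<^sub>0 'b::comm_monoid_add"
  assumes "P 0" "\<And>m a. P (Poly_Mapping.single m a)" "\<And>p q. P p \<Longrightarrow> P q \<Longrightarrow> P (p + q)"
  shows "P p"
proof -
  have "P (\<Sum>m\<in>A. Poly_Mapping.single m (f m))" if "finite A" for A f
    using that by (induction A rule: finite_induct) (simp_all add: assms)
  then show ?thesis by (subst pm_sum_single) simp
qed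

subsection \<open>Evaluation homomorphism\<close>

definition mon :: "(nat \<Rightarrow> 'b::comm_ring_1) \<Rightarrow> (nat \<Rightarrow>\<^sub>0 nat) \<Rightarrow> 'b" where
  "mon s m = (\<Prod>j\<in>Poly_Mapping.keys m. s j ^ Poly_Mapping.lookup m j)"

lemma mon_superset: "finite A \<Longrightarrow> Poly_Mapping.keys m \<subseteq> A \<Longrightarrow>
   mon s m = (\<Prod>j\<in>A. s j ^ Poly_Mapping.lookup m j)"
  unfolding mon_def by (rule prod.mono_neutral_left) (auto simp: in_keys_iff)

lemma mon_add: "mon s (m + m') = mon s m * mon s m'"
proof -
  let ?A = "Poly_Mapping.keys m \<union> Poly_Mapping.keys m'"
  have f: "finite ?A" by simp
  have "mon s (m + m') = (\<Prod>j\<in>?A. s j ^ Poly_Mapping.lookup (m + m') j)"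
    apply (rule mon_superset[OF f])
    using keys_add[of m m'] by blast
  also have "\<dots> = (\<Prod>j\<in>?A. s j ^ Poly_Mapping.lookup m j) * (\<Prod>j\<in>?A. s j ^ Poly_Mapping.lookup m' j)"
    unfolding lookup_add power_add by (rule prod.distrib)
  also have "\<dots> = mon s m * mon s m'"
    using mon_superset[OF f, of m s] mon_superset[OF f, of m' s] by simp
  finally show ?thesis .
qed

lemma mon_zero [simp]: "mon s 0 = 1" by (simp add: mon_def)

lemma mon_single [simp]: "mon s (Poly_Mapping.single j k) = s j ^ k"
  by (cases "k = 0") (simp_all add: mon_def)

definition mev :: "('k::comm_ring_1 \<Rightarrow> 'b::comm_ring_1) \<Rightarrow> (nat \<Rightarrow> 'b) \<Rightarrow> 'k mpoly \<Rightarrow> 'b" where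
  "mev h s p = (\<Sum>m\<in>Poly_Mapping.keys p. h (Poly_Mapping.lookup p m) * mon s m)"

lemma mev_superset: "h 0 = 0 \<Longrightarrow> finite A \<Longrightarrow> Poly_Mapping.keys p \<subseteq> A \<Longrightarrow>
   mev h s p = (\<Sum>m\<in>A. h (Poly_Mapping.lookup p m) * mon s m)"
  unfolding mev_def by (rule sum.mono_neutral_left) (auto simp: in_keys_iff)

lemma mev_0 [simp]: "mev h s 0 = 0" by (simp add: mev_def)

lemma mev_add:
  assumes "\<And>x y. h (x + y) = h x + h y"
  shows "mev h s (p + q) = mev h s p + mev h s q"
proof -
  have h0: "h 0 = 0" using assms[of 0 0] by simp
  let ?A = "Poly_Mapping.keys p \<union> Poly_Mapping.keys q"
  have f: "finite ?A" by simp
  have "mev h s (p + q) = (\<Sum>m\<in>?A. h (Poly_Mapping.lookup (p + q) m) * mon s m)"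
    apply (rule mev_superset[where h=h, OF h0 f])
    using keys_add[of p q] by blast
  also have "\<dots> = (\<Sum>m\<in>?A. h (Poly_Mapping.lookup p m) * mon s m) + (\<Sum>m\<in>?A. h (Poly_Mapping.lookup q m) * mon s m)"
    by (simp add: lookup_add assms distrib_right sum.distrib)
  also have "\<dots> = mev h s p + mev h s q"
    using mev_superset[where h=h, OF h0 f, of p s] mev_superset[where h=h, OF h0 f, of q s] by simp
  finally show ?thesis .
qed

lemma mev_single: "h 0 = 0 \<Longrightarrow> mev h s (Poly_Mapping.single m a) = h a * mon s m"
  by (cases "a = 0") (simp_all add: mev_def)

lemma mev_mult:
  assumes h: "rhom h"
  shows "mev h s (p * q) = mev h s p * mev h s q"
proof -
  have add: "\<And>p q. mev h s (p + q) = mev h s p + mev h s q"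
    by (rule mev_add) (rule rhom_add[OF h])
  have h0: "h 0 = 0" by (rule rhom_0[OF h])
  have sgl: "mev h s (Poly_Mapping.single m a * q) = mev h s (Poly_Mapping.single m a) * mev h s q" for m a
  proof (induction q rule: pm_induct)
    case 1 then show ?case by simp
  next
    case (2 m' b) then show ?case
      by (simp add: mult_single mev_single[where h=h, OF h0] rhom_mult[OF h] mon_add)
  next
    case (3 p q) then show ?case by (simp add: distrib_left add)
  qed
  show ?thesis
  proof (induction p rule: pm_induct)
    case 1 then show ?case by simp
  next
    case (2 m a) then show ?case by (rule sgl)
  next
    case (3 p1 p2) then show ?case by (simp add: distrib_right add)
  qed
qed

lemma rhom_mev: "rhom h \<Longrightarrow> rhom (mev h s)"
  unfolding rhom_def[of "mev h s"]
  by (auto intro: mev_mult mev_add rhom_add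
      simp: mev_single[OF rhom_0] rhom_1 simp flip: single_one)

lemma mev_Var [simp]: "rhom h \<Longrightarrow> mev h s (Var i) = s i"
  by (simp add: Var_def mev_single rhom_0 rhom_1)

lemma mev_const [simp]: "rhom h \<Longrightarrow> mev h s (Poly_Mapping.single 0 a) = h a"
  by (simp add: mev_single rhom_0)

lemma Var_power: "(Var i :: 'k::comm_ring_1 mpoly) ^ k = Poly_Mapping.single (Poly_Mapping.single i k) 1"
proof (induction k)
  case 0 then show ?case by simp
next
  case (Suc k) then show ?case
    by (simp add: Var_def mult_single single_add[symmetric])
qed

lemma prod_single_monomial:
  "finite A \<Longrightarrow> (\<Prod>j\<in>A. (Poly_Mapping.single (f j) 1 :: 'k::comm_ring_1 mpoly))
     = Poly_Mapping.single (\<Sum>j\<in>A. f j) 1"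
  by (induction A rule: finite_induct) (simp_all add: mult_single)

lemma mon_Var: "mon Var m = (Poly_Mapping.single m 1 :: 'k::comm_ring_1 mpoly)"
proof -
  have "mon Var m = (\<Prod>j\<in>Poly_Mapping.keys m. (Poly_Mapping.single (Poly_Mapping.single j (Poly_Mapping.lookup m j)) 1 :: 'k mpoly))"
    by (simp add: mon_def Var_power)
  also have "\<dots> = Poly_Mapping.single (\<Sum>j\<in>Poly_Mapping.keys m. Poly_Mapping.single j (Poly_Mapping.lookup m j)) 1"
    by (simp add: prod_single_monomial)
  also have "\<dots> = Poly_Mapping.single m 1"
    by (simp flip: pm_sum_single)
  finally show ?thesis .
qed

lemma single_split: "Poly_Mapping.single m a = (Poly_Mapping.single 0 a :: 'k::comm_ring_1 mpoly) * mon Var m"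
  by (simp add: mon_Var mult_single)

lemma hom_repr:
  fixes \<phi> :: "'k::comm_ring_1 mpoly \<Rightarrow> 'b::comm_ring_1"
  assumes h: "rhom \<phi>"
  shows "\<phi> p = mev (\<lambda>a. \<phi> (Poly_Mapping.single 0 a)) (\<lambda>j. \<phi> (Var j)) p"
proof (induction p rule: pm_induct)
  case 1 then show ?case by (simp add: rhom_0[OF h])
next
  case (2 m a)
  have "\<phi> (Poly_Mapping.single m a) = \<phi> (Poly_Mapping.single 0 a) * \<phi> (mon Var m)"
    by (subst single_split) (simp add: rhom_mult[OF h])
  also have "\<phi> (mon Var m) = mon (\<lambda>j. \<phi> (Var j)) m"
    by (simp add: mon_def rhom_prod[OF h] rhom_power[OF h])
  finally show ?case
    by (subst mev_single) (simp_all add: rhom_0[OF h])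
next
  case (3 p q) then show ?case
    by (simp add: rhom_add[OF h] mev_add single_add)
qed

lemma hom_ext:
  fixes \<phi>1 \<phi>2 :: "'k::comm_ring_1 mpoly \<Rightarrow> 'b::comm_ring_1"
  assumes "rhom \<phi>1" "rhom \<phi>2" "\<And>a. \<phi>1 (Poly_Mapping.single 0 a) = \<phi>2 (Poly_Mapping.single 0 a)"
    "\<And>j. \<phi>1 (Var j) = \<phi>2 (Var j)"
  shows "\<phi>1 p = \<phi>2 p"
  apply (subst hom_repr[OF assms(1)])
  apply (subst hom_repr[OF assms(2)])
  apply (simp add: assms(3,4))
  done

lemma rhom_cpoly: "rhom (\<lambda>k::'k::comm_ring_1. [:(Poly_Mapping.single 0 k :: 'k mpoly):])"
  by (simp add: rhom_def single_add mult_single ac_simps)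

definition psi :: "nat \<Rightarrow> 'k::comm_ring_1 mpoly \<Rightarrow> 'k mpoly poly" where
  "psi y = mev (\<lambda>k. [:Poly_Mapping.single 0 k:]) (\<lambda>j. if j = y then [:0,1:] else [:Var j:])"

lemma rhom_psi: "rhom (psi y)"
  unfolding psi_def by (rule rhom_mev[OF rhom_cpoly])

lemma psi_Var: "psi y (Var j) = (if j = y then [:0,1:] else [:Var j:])"
  unfolding psi_def by (simp add: rhom_cpoly)

lemma psi_const: "psi y (Poly_Mapping.single 0 a) = [:Poly_Mapping.single 0 a:]"
  unfolding psi_def by (simp add: rhom_cpoly)

lemma rhom_poly_eval: "rhom (\<lambda>P. poly P x)"
  by (simp add: rhom_def)

lemma ev_psi: "poly (psi y p) (Var y) = p"
proof -
  have "((\<lambda>P. poly P (Var y)) \<circ> psi y) p = id p"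
    by (rule hom_ext[of "(\<lambda>P. poly P (Var y)) \<circ> psi y" id]) (auto simp: rhom_comp rhom_psi rhom_poly_eval rhom_id psi_Var psi_const)
  then show ?thesis by simp
qed

lemma psi_inj: "psi y p = psi y q \<Longrightarrow> p = q"
  by (metis ev_psi)

lemma psi_eq_0: "psi y p = 0 \<longleftrightarrow> p = 0"
  by (metis psi_inj rhom_0 rhom_psi)

lemma rhom_map_poly:
  assumes h: "rhom \<phi>"
  shows "rhom (map_poly \<phi>)"
proof -
  have z: "\<phi> 0 = 0" by (rule rhom_0[OF h])
  have "map_poly \<phi> (x + y) = map_poly \<phi> x + map_poly \<phi> y" for x y
    by (rule poly_eqI) (simp add: coeff_map_poly[where f=\<phi>, OF z] rhom_add[OF h])
  moreover have "map_poly \<phi> (x * y) = map_poly \<phi> x * map_poly \<phi> y" for x y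
    by (rule poly_eqI) (simp add: coeff_map_poly[where f=\<phi>, OF z] coeff_mult rhom_sum[OF h] rhom_mult[OF h])
  moreover have "map_poly \<phi> 1 = 1" by (simp add: rhom_1[OF h])
  ultimately show ?thesis by (simp add: rhom_def)
qed

definition fs :: "nat set \<Rightarrow> (nat \<Rightarrow> nat) \<Rightarrow> 'k::comm_ring_1 mpoly" where
  "fs T a = (\<Sum>j\<in>T. Var j ^ a j)"

lemma const_sum: "(\<Sum>x\<in>A. [:f x:]) = [:\<Sum>x\<in>A. f x:]"
  by (induction A rule: infinite_finite_induct) simp_all

lemma X_pow_monom: "([:0,1:] :: 'a::comm_semiring_1 poly) ^ k = monom 1 k"
  by (simp add: monom_altdef)

lemma psi_fs:
  assumes "finite T" "l \<in> T"
  shows "psi l (fs T a :: 'k::comm_ring_1 mpoly) = monom 1 (a l) + [:fs (T - {l}) a:]"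
proof -
  have "fs T a = (Var l ^ a l :: 'k mpoly) + fs (T - {l}) a"
    using assms by (simp add: fs_def sum.remove)
  moreover have "psi l (Var l ^ a l :: 'k mpoly) = monom 1 (a l)"
    by (simp add: rhom_power[OF rhom_psi] psi_Var X_pow_monom)
  moreover have "psi l (fs (T - {l}) a :: 'k mpoly) = [:fs (T - {l}) a:]"
    by (simp add: fs_def rhom_sum[OF rhom_psi] rhom_power[OF rhom_psi] psi_Var poly_const_pow const_sum)
  ultimately show ?thesis by (simp add: rhom_add[OF rhom_psi])
qed

lemma monic_shape:
  assumes "(a::nat) \<ge> 1"
  shows "degree (monom (1::'a::comm_ring_1) a + [:c:]) = a"
    and "lead_coeff (monom (1::'a) a + [:c:]) = 1"
proof -
  have d: "degree (monom (1::'a) a + [:c:]) = a"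
    using assms by (subst degree_add_eq_left) (simp_all add: degree_monom_eq)
  show "degree (monom (1::'a) a + [:c:]) = a" by (rule d)
  have "lead_coeff (monom (1::'a) a + [:c:]) = coeff (monom (1::'a) a + [:c:]) a"
    by (simp only: d)
  also have "\<dots> = 1" using assms by (cases a) simp_all
  finally show "lead_coeff (monom (1::'a) a + [:c:]) = 1" .
qed

lemma monic_div:
  fixes G P :: "'a::comm_ring_1 poly"
  assumes "lead_coeff G = 1"
  shows "\<exists>q r. P = G * q + r \<and> (r = 0 \<or> degree r < degree G)"
proof -
  have G0: "G \<noteq> 0" using assms by auto
  obtain q r where qr: "pseudo_divmod P G = (q, r)" by (cases "pseudo_divmod P G") auto
  from pseudo_divmod[OF G0 qr] assms show ?thesis by auto
qed

lemma fs_not_dvd: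
  fixes p :: "'k::idom mpoly"
  assumes "finite T" "l \<in> T" "a l \<ge> 1" "degree (psi l p) = 0" "p \<noteq> 0"
  shows "\<not> fs T a dvd p"
proof
  assume "fs T a dvd p"
  then have "psi l (fs T a) dvd psi l p" by (rule rhom_dvd[OF rhom_psi])
  moreover have "psi l p \<noteq> 0" using assms(5) by (simp add: psi_eq_0)
  ultimately have "degree (psi l (fs T a :: 'k mpoly)) \<le> degree (psi l p)"
    by (rule dvd_imp_degree_le)
  then show False using assms by (simp add: psi_fs monic_shape)
qed

instantiation fract :: (idom)
  "{unique_euclidean_ring, normalization_euclidean_semiring, normalization_semidom_multiplicative}"
begin
definition [simp]: "normalize_fract (x :: 'a fract) = (if x = 0 then 0 else (1::'a fract))"
definition [simp]: "unit_factor_fract (x :: 'a fract) = x"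
definition [simp]: "modulo_fract (x :: 'a fract) (y::'a fract) = (if y = 0 then x else 0)"
definition [simp]: "euclidean_size_fract (x :: 'a fract) = (if x = 0 then 0 else 1::nat)"
definition [simp]: "division_segment (x :: 'a fract) = 1"
instance
  by standard
    (simp_all add: dvd_field_iff field_split_simps split: if_splits)
end

instantiation fract :: (idom) euclidean_ring_gcd
begin
definition gcd_fract :: "'a fract \<Rightarrow> 'a fract \<Rightarrow> 'a fract" where
  "gcd_fract = Euclidean_Algorithm.gcd"
definition lcm_fract :: "'a fract \<Rightarrow> 'a fract \<Rightarrow> 'a fract" where
  "lcm_fract = Euclidean_Algorithm.lcm"
definition Gcd_fract :: "'a fract set \<Rightarrow> 'a fract" where
 "Gcd_fract = Euclidean_Algorithm.Gcd"
definition Lcm_fract :: "'a fract set \<Rightarrow> 'a fract" where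
 "Lcm_fract = Euclidean_Algorithm.Lcm"
instance by standard (simp_all add: gcd_fract_def lcm_fract_def Gcd_fract_def Lcm_fract_def)
end

instance fract :: (idom) field_gcd ..

lemma coeff_fermat_dvd:
  fixes c :: "'a::comm_ring_1"
  assumes "\<pi> dvd c" "k \<noteq> a"
  shows "\<pi> dvd coeff (monom 1 a + [:c:]) k"
  using assms by (cases k) (auto simp: dvd_0_right)

lemma eisenstein_prime:
  fixes c \<pi> :: "'a::{factorial_ring_gcd,semiring_gcd_mult_normalize}"
  assumes p: "prime_elem \<pi>" and pc: "\<pi> dvd c" and npc: "\<not> \<pi>^2 dvd c" and a: "a \<ge> 1"
  shows "prime_elem (monom 1 a + [:c:])"
proof -
  define F where "F = monom 1 a + [:c:]"
  have dF: "degree F = a" unfolding F_def by (rule monic_shape(1)[OF a])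
  have lF: "lead_coeff F = 1" unfolding F_def by (rule monic_shape(2)[OF a])
  have F0: "F \<noteq> 0" using lF by auto
  have nu: "\<not> is_unit F"
  proof
    assume "is_unit F"
    then obtain u where "F = [:u:]" by (auto simp: is_unit_poly_iff)
    then show False using dF a by simp
  qed
  have pnu: "\<not> \<pi> dvd 1" using p by (rule prime_elem_not_unit)
  have cF0: "coeff F 0 = c" unfolding F_def using a by simp
  have irr: "irreducible F"
  proof (rule irreducibleI[OF F0 nu])
    fix G H assume FGH: "F = G * H"
    show "is_unit G \<or> is_unit H"
    proof (rule ccontr)
      assume nn: "\<not> (is_unit G \<or> is_unit H)"
      have G0: "G \<noteq> 0" and H0: "H \<noteq> 0" using F0 FGH by auto
      have lGH: "lead_coeff G * lead_coeff H = 1" using lF FGH by (simp add: lead_coeff_mult)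
      have uG: "is_unit (lead_coeff G)" and uH: "is_unit (lead_coeff H)"
        using lGH by (metis dvd_triv_left dvd_triv_right)+
      have degs: "degree G + degree H = a" using dF FGH G0 H0 by (simp add: degree_mult_eq)
      have dG: "degree G \<ge> 1"
      proof (rule ccontr)
        assume "\<not> degree G \<ge> 1"
        then have "degree G = 0" by simp
        then have "G = [:lead_coeff G:]" by (metis degree_0_id)
        then have "is_unit G" using uG by (metis is_unit_const_poly_iff)
        then show False using nn by simp
      qed
      have dH: "degree H \<ge> 1"
      proof (rule ccontr)
        assume "\<not> degree H \<ge> 1"
        then have "degree H = 0" by simp
        then have "H = [:lead_coeff H:]" by (metis degree_0_id)
        then have "is_unit H" using uH by (metis is_unit_const_poly_iff)
        then show False using nn by simp
      qed
      have exG: "\<exists>i. \<not> \<pi> dvd coeff G i"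
        using uG pnu by (metis dvd_trans)
      have exH: "\<exists>i. \<not> \<pi> dvd coeff H i"
        using uH pnu by (metis dvd_trans)
      define i0 where "i0 = (LEAST i. \<not> \<pi> dvd coeff G i)"
      define j0 where "j0 = (LEAST i. \<not> \<pi> dvd coeff H i)"
      have i0: "\<not> \<pi> dvd coeff G i0" unfolding i0_def using exG by (metis LeastI)
      have j0: "\<not> \<pi> dvd coeff H j0" unfolding j0_def using exH by (metis LeastI)
      have bi: "\<pi> dvd coeff G i" if "i < i0" for i
        using that unfolding i0_def by (metis not_less_Least)
      have bj: "\<pi> dvd coeff H j" if "j < j0" for j
        using that unfolding j0_def by (metis not_less_Least)
      have i0le: "i0 \<le> degree G"
        unfolding i0_def using uG pnu by (metis Least_le dvd_trans)
      have j0le: "j0 \<le> degree H"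
        unfolding j0_def using uH pnu by (metis Least_le dvd_trans)
      define N where "N = i0 + j0"
      have "coeff F N = (\<Sum>i\<le>N. coeff G i * coeff H (N - i))"
        using FGH by (simp add: coeff_mult)
      also have "\<dots> = coeff G i0 * coeff H (N - i0) + (\<Sum>i\<in>{..N} - {i0}. coeff G i * coeff H (N - i))"
        by (rule sum.remove) (auto simp: N_def)
      finally have cN: "coeff F N = coeff G i0 * coeff H j0 + (\<Sum>i\<in>{..N} - {i0}. coeff G i * coeff H (N - i))"
        by (simp add: N_def)
      have rest: "\<pi> dvd (\<Sum>i\<in>{..N} - {i0}. coeff G i * coeff H (N - i))"
      proof (rule dvd_sum)
        fix i assume "i \<in> {..N} - {i0}"
        then have "i < i0 \<or> (i > i0 \<and> N - i < j0)" by (auto simp: N_def)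
        then show "\<pi> dvd coeff G i * coeff H (N - i)"
          using bi bj by (meson dvd_mult dvd_mult2)
      qed
      have main: "\<not> \<pi> dvd coeff G i0 * coeff H j0"
        using p i0 j0 by (simp add: prime_elem_dvd_mult_iff)
      have "\<not> \<pi> dvd coeff F N"
      proof
        assume "\<pi> dvd coeff F N"
        then have "\<pi> dvd coeff F N - (\<Sum>i\<in>{..N} - {i0}. coeff G i * coeff H (N - i))"
          using rest by (rule dvd_diff)
        then show False using main cN by simp
      qed
      then have "N = a" using coeff_fermat_dvd[OF pc] unfolding F_def by blast
      then have "i0 = degree G" "j0 = degree H" using degs i0le j0le by (auto simp: N_def)
      then have "i0 > 0" "j0 > 0" using dG dH by auto
      then have "\<pi> dvd coeff G 0" "\<pi> dvd coeff H 0" using bi bj by auto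
      then have "\<pi> * \<pi> dvd coeff G 0 * coeff H 0" by (rule mult_dvd_mono)
      moreover have "coeff G 0 * coeff H 0 = c" using cF0 FGH by (simp add: coeff_mult)
      ultimately show False using npc by (simp add: power2_eq_square)
    qed
  qed
  show ?thesis using irr F_def by (simp add: irreducible_imp_prime_elem)
qed

lemma simple_prime_factor:
  fixes e :: "'K::field_gcd"
  assumes e: "e \<noteq> 0" and b: "b \<ge> 1" and nb: "(of_nat b :: 'K) \<noteq> 0"
  shows "\<exists>\<pi>. prime_elem \<pi> \<and> \<pi> dvd (monom 1 b + [:e:]) \<and> \<not> \<pi>^2 dvd (monom 1 b + [:e:])"
proof -
  define C where "C = monom (1::'K) b + [:e:]"
  have dC: "degree C = b" unfolding C_def by (rule monic_shape(1)[OF b])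
  have lC: "lead_coeff C = 1" unfolding C_def by (rule monic_shape(2)[OF b])
  have C0: "C \<noteq> 0" using lC by auto
  have nu: "\<not> is_unit C"
  proof
    assume "is_unit C"
    then obtain u where "C = [:u:]" by (auto simp: is_unit_poly_iff)
    then show False using dC b by simp
  qed
  obtain \<pi> where pC: "\<pi> dvd C" and pr: "prime \<pi>" using prime_divisor_exists[OF C0 nu] by blast
  have p: "prime_elem \<pi>" using pr by blast
  have pnu: "\<not> is_unit \<pi>" using p by (rule prime_elem_not_unit)
  have "\<not> \<pi>^2 dvd C"
  proof
    assume "\<pi>^2 dvd C"
    then obtain h where "C = \<pi>^2 * h" by (elim dvdE)
    then have h: "C = \<pi> * (\<pi> * h)" by (simp add: power2_eq_square mult.assoc)
    have "pderiv C = \<pi> * pderiv (\<pi> * h) + (\<pi> * h) * pderiv \<pi>"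
      by (subst h) (rule pderiv_mult)
    then have d1: "\<pi> dvd pderiv C" by simp
    have "pderiv C = monom (of_nat b) (b - 1)"
      unfolding C_def by (simp add: pderiv_add pderiv_monom pderiv_pCons)
    also have "\<dots> = [:of_nat b:] * [:0,1:] ^ (b - 1)"
      by (simp add: monom_altdef)
    finally have "\<pi> dvd [:of_nat b:] * [:0,1:] ^ (b - 1)" using d1 by simp
    moreover have "\<not> \<pi> dvd [:of_nat b:]"
    proof
      assume "\<pi> dvd [:of_nat b:]"
      moreover have "is_unit [:(of_nat b :: 'K):]" using nb by (simp add: is_unit_const_poly_iff dvd_field_iff)
      ultimately show False using pnu by (metis dvd_trans)
    qed
    ultimately have "\<pi> dvd [:0,1:] ^ (b - 1)" using p by (metis prime_elem_dvd_mult_iff)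
    then have "\<pi> dvd [:0,1:]" using p prime_elem_dvd_power by blast
    then have "\<pi> dvd [:0,1:] * monom 1 (b - 1)" by (rule dvd_mult2)
    moreover have "[:0,1:] * monom (1::'K) (b - 1) = monom 1 b"
      using b by (cases b) (simp_all add: monom_Suc)
    ultimately have "\<pi> dvd monom 1 b" by simp
    then have "\<pi> dvd C - monom 1 b" using pC by (simp add: dvd_diff)
    then have "\<pi> dvd [:e:]" by (simp add: C_def)
    moreover have "is_unit [:e:]" using e by (simp add: is_unit_const_poly_iff dvd_field_iff)
    ultimately show False using pnu by (metis dvd_trans)
  qed
  then show ?thesis using p pC C_def by blast
qed

lemma lookup_fs:
  assumes "finite T" "\<forall>j\<in>T. a j \<ge> 1"
  shows "Poly_Mapping.lookup (fs T a :: 'k::comm_ring_1 mpoly) m =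
         (if \<exists>j\<in>T. m = Poly_Mapping.single j (a j) then 1 else 0)"
proof -
  have inj: "Poly_Mapping.single i (a i) = Poly_Mapping.single j (a j) \<longleftrightarrow> i = j"
    if "i \<in> T" "j \<in> T" for i j
  proof
    assume eq: "Poly_Mapping.single i (a i) = Poly_Mapping.single j (a j)"
    have "Poly_Mapping.lookup (Poly_Mapping.single i (a i)) i = a i" by simp
    then have "Poly_Mapping.lookup (Poly_Mapping.single j (a j)) i \<noteq> 0" using eq assms that by auto
    then show "i = j" by (simp add: lookup_single when_def split: if_splits)
  qed simp
  have "Poly_Mapping.lookup (fs T a :: 'k mpoly) m =
        (\<Sum>j\<in>T. if Poly_Mapping.single j (a j) = m then 1 else 0)"
    by (simp add: fs_def Var_power lookup_sum lookup_single when_def)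
  also have "\<dots> = (if \<exists>j\<in>T. m = Poly_Mapping.single j (a j) then 1 else 0)"
  proof (cases "\<exists>j\<in>T. m = Poly_Mapping.single j (a j)")
    case True
    then obtain j where j: "j \<in> T" "m = Poly_Mapping.single j (a j)" by blast
    have "(\<Sum>i\<in>T. if Poly_Mapping.single i (a i) = m then 1 else 0) =
          (\<Sum>i\<in>T. if i = j then (1::'k) else 0)"
      by (rule sum.cong) (use inj j in auto)
    then show ?thesis using True j assms(1) by simp
  next
    case False
    then have "(\<Sum>i\<in>T. if Poly_Mapping.single i (a i) = m then 1 else (0::'k)) = 0"
      by (intro sum.neutral) auto
    then show ?thesis using False by simp
  qed
  finally show ?thesis .
qed

lemma fs_nonzero:
  assumes "finite T" "\<forall>j\<in>T. a j \<ge> 1" "T \<noteq> {}"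
  shows "(fs T a :: 'k::{comm_ring_1} mpoly) \<noteq> 0 \<or> (1::'k) = 0"
proof -
  obtain j where "j \<in> T" using assms by blast
  have "Poly_Mapping.lookup (fs T a :: 'k mpoly) (Poly_Mapping.single j (a j)) =
    (if \<exists>i\<in>T. Poly_Mapping.single j (a j) = Poly_Mapping.single i (a i) then 1 else 0)"
    by (rule lookup_fs[OF assms(1,2)])
  then have "Poly_Mapping.lookup (fs T a :: 'k mpoly) (Poly_Mapping.single j (a j)) = 1"
    using \<open>j \<in> T\<close> by auto
  then show ?thesis by auto
qed

lemma map_poly_inj0:
  assumes "map_poly f p = 0" "\<And>x. f x = 0 \<Longrightarrow> x = 0" "f 0 = 0"
  shows "p = 0"
proof (rule poly_eqI)
  fix n
  have "coeff (map_poly f p) n = 0" using assms(1) by simp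
  then show "coeff p n = coeff 0 n" using assms(2) coeff_map_poly[of f p n, OF assms(3)] by simp
qed

lemma rhom_to_fract: "rhom (to_fract :: 'a::idom \<Rightarrow> 'a fract)"
  by (simp add: rhom_def)

lemma of_nat_mpoly_fract_nz:
  assumes "b \<ge> 1"
  shows "(of_nat b :: 'k::field_char_0 mpoly fract) \<noteq> 0"
proof -
  have "(of_nat b :: 'k mpoly fract) = to_fract (of_nat b)"
    by (induction b) simp_all
  moreover have "(of_nat b :: 'k mpoly) \<noteq> 0" using assms by simp
  ultimately show ?thesis by simp
qed

lemma map_poly_fermat:
  assumes "rhom f"
  shows "map_poly f (monom 1 b + [:c:]) = monom 1 b + [:f c:]"
proof -
  have z: "f 0 = 0" by (rule rhom_0[OF assms])
  show ?thesis
    by (rule poly_eqI) (simp add: coeff_map_poly[where f=f, OF z] rhom_add[OF assms] rhom_1[OF assms] z coeff_pCons split: nat.splits)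
qed

theorem fs_prime:
  fixes a :: "nat \<Rightarrow> nat" and A B :: "'k::field_char_0 mpoly"
  assumes T: "finite T" and y: "y \<in> T" and z: "z \<in> T" and yz: "y \<noteq> z" and T3: "T - {y, z} \<noteq> {}"
    and a: "\<forall>j\<in>T. a j \<ge> 1"
    and dv: "fs T a dvd A * B"
  shows "fs T a dvd A \<or> fs T a dvd B"
proof -
  define \<Phi> where "\<Phi> = (\<lambda>p::'k mpoly. map_poly to_fract (psi z p))"
  define \<Psi> where "\<Psi> = (\<lambda>p::'k mpoly. map_poly \<Phi> (psi y p))"
  have rP: "rhom \<Phi>" unfolding \<Phi>_def
    using rhom_comp[OF rhom_psi rhom_map_poly[OF rhom_to_fract]] by (simp add: comp_def)
  have rPs: "rhom \<Psi>" unfolding \<Psi>_def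
    using rhom_comp[OF rhom_psi rhom_map_poly[OF rP]] by (simp add: comp_def)
  define c where "c = (fs (T - {y}) a :: 'k mpoly)"
  define e where "e = (fs (T - {y} - {z}) a :: 'k mpoly)"
  have ay: "a y \<ge> 1" and az: "a z \<ge> 1" using a y z by auto
  have e0: "e \<noteq> 0" unfolding e_def using fs_nonzero[of "T - {y} - {z}" a] T a T3 by auto
  have psiy: "psi y (fs T a :: 'k mpoly) = monom 1 (a y) + [:c:]"
    unfolding c_def by (rule psi_fs[OF T y])
  have psiz: "psi z c = monom 1 (a z) + [:e:]"
    unfolding c_def e_def using T z yz by (intro psi_fs) auto
  have Phic: "\<Phi> c = monom 1 (a z) + [:to_fract e:]"
    unfolding \<Phi>_def psiz by (rule map_poly_fermat[OF rhom_to_fract])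
  have Psif: "\<Psi> (fs T a) = monom 1 (a y) + [:\<Phi> c:]"
    unfolding \<Psi>_def psiy by (rule map_poly_fermat[OF rP])
  obtain \<pi> where pi: "prime_elem \<pi>" "\<pi> dvd \<Phi> c" "\<not> \<pi>^2 dvd \<Phi> c"
    using simple_prime_factor[of "to_fract e" "a z"] e0 az of_nat_mpoly_fract_nz[OF az] Phic by auto
  have prF: "prime_elem (\<Psi> (fs T a))"
    unfolding Psif by (rule eisenstein_prime[OF pi ay])
  have Phi_inj: "\<Phi> x = 0 \<Longrightarrow> x = 0" for x
  proof -
    assume "\<Phi> x = 0"
    then have "psi z x = 0" unfolding \<Phi>_def by (rule map_poly_inj0) simp_all
    then show "x = 0" by (simp add: psi_eq_0)
  qed
  have pull: "fs T a dvd X" if "\<Psi> (fs T a) dvd \<Psi> X" for X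
  proof -
    have lG: "lead_coeff (psi y (fs T a :: 'k mpoly)) = 1" unfolding psiy by (rule monic_shape(2)[OF ay])
    have dG: "degree (psi y (fs T a :: 'k mpoly)) = a y" unfolding psiy by (rule monic_shape(1)[OF ay])
    have dF: "degree (\<Psi> (fs T a)) = a y" unfolding Psif by (rule monic_shape(1)[OF ay])
    obtain q r where qr: "psi y X = psi y (fs T a) * q + r" and r: "r = 0 \<or> degree r < degree (psi y (fs T a :: 'k mpoly))"
      using monic_div[OF lG] by blast
    have "\<Psi> X = \<Psi> (fs T a) * map_poly \<Phi> q + map_poly \<Phi> r"
      unfolding \<Psi>_def qr by (simp add: rhom_add[OF rhom_map_poly[OF rP]] rhom_mult[OF rhom_map_poly[OF rP]])
    then have dvr: "\<Psi> (fs T a) dvd map_poly \<Phi> r"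
      using that by (metis dvd_add_right_iff dvd_triv_left)
    have r0: "r = 0"
    proof (rule ccontr)
      assume rn: "r \<noteq> 0"
      have "map_poly \<Phi> r \<noteq> 0"
      proof
        assume "map_poly \<Phi> r = 0"
        then have "r = 0" by (rule map_poly_inj0) (simp_all add: Phi_inj rhom_0[OF rP])
        then show False using rn by simp
      qed
      then have "degree (\<Psi> (fs T a)) \<le> degree (map_poly \<Phi> r)"
        using dvr by (metis dvd_imp_degree_le)
      also have "\<dots> \<le> degree r" by (rule map_poly_degree_leq)
      finally show False using r rn dF dG by simp
    qed
    have "X = poly (psi y X) (Var y)" by (simp add: ev_psi)
    also have "\<dots> = poly (psi y (fs T a)) (Var y) * poly q (Var y)" using qr r0 by simp
    also have "\<dots> = fs T a * poly q (Var y)" by (simp add: ev_psi)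
    finally show ?thesis by simp
  qed
  have "\<Psi> (fs T a) dvd \<Psi> A * \<Psi> B"
    using rhom_dvd[OF rPs dv] by (simp add: rhom_mult[OF rPs])
  then have "\<Psi> (fs T a) dvd \<Psi> A \<or> \<Psi> (fs T a) dvd \<Psi> B"
    using prF by (simp add: prime_elem_dvd_mult_iff)
  then show ?thesis using pull by blast
qed

lemma rhom_const: "rhom (\<lambda>k::'k::comm_ring_1. (Poly_Mapping.single 0 k :: 'k mpoly))"
  by (simp add: rhom_def single_add mult_single)

definition sig :: "nat set \<Rightarrow> 'k::comm_ring_1 mpoly \<Rightarrow> 'k mpoly" where
  "sig V = mev (\<lambda>k. Poly_Mapping.single 0 k) (\<lambda>j. if j \<in> V then 0 else Var j)"

lemma rhom_sig: "rhom (sig V)"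
  unfolding sig_def by (rule rhom_mev[OF rhom_const])

lemma sig_Var: "sig V (Var j) = (if j \<in> V then 0 else Var j)"
  unfolding sig_def by (simp add: rhom_const)

lemma mon_sig: "mon (\<lambda>j. if j \<in> V then 0 else Var j) m =
   (if Poly_Mapping.keys m \<inter> V = {} then (Poly_Mapping.single m 1 :: 'k::comm_ring_1 mpoly) else 0)"
proof (cases "Poly_Mapping.keys m \<inter> V = {}")
  case True
  have "mon (\<lambda>j. if j \<in> V then 0 else Var j) m = (mon Var m :: 'k mpoly)"
    unfolding mon_def by (rule prod.cong) (use True in auto)
  then show ?thesis using True by (simp add: mon_Var)
next
  case False
  then obtain j where j: "j \<in> Poly_Mapping.keys m" "j \<in> V" by blast
  have z: "(if j \<in> V then 0 else Var j) ^ Poly_Mapping.lookup m j = (0 :: 'k mpoly)"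
    using j by (simp add: in_keys_iff power_0_left)
  have "mon (\<lambda>j. if j \<in> V then 0 else Var j) m = (0 :: 'k mpoly)"
    unfolding mon_def by (rule prod_zero) (use j z in auto)
  then show ?thesis using False by simp
qed

lemma sig_single: "sig V (Poly_Mapping.single m a :: 'k::comm_ring_1 mpoly) =
   (if Poly_Mapping.keys m \<inter> V = {} then Poly_Mapping.single m a else 0)"
  unfolding sig_def by (simp add: mev_single mon_sig mult_single)

lemma lookup_sig: "Poly_Mapping.lookup (sig V p :: 'k::comm_ring_1 mpoly) m =
   (if Poly_Mapping.keys m \<inter> V = {} then Poly_Mapping.lookup p m else 0)"
proof (induction p rule: pm_induct)
  case 1 then show ?case by (simp add: rhom_0[OF rhom_sig])
next
  case (2 m' a) then show ?case by (simp add: sig_single lookup_single when_def)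
next
  case (3 p q) then show ?case by (simp add: rhom_add[OF rhom_sig] lookup_add)
qed

lemma sig_id: "\<forall>m\<in>Poly_Mapping.keys p. Poly_Mapping.keys m \<inter> V = {} \<Longrightarrow> sig V (p :: 'k::comm_ring_1 mpoly) = p"
  apply (rule poly_mapping_eqI)
  apply (simp add: lookup_sig)
  apply (auto simp: in_keys_iff)
  done

lemma sig_sig: "sig V (sig W p) = sig (V \<union> W) (p :: 'k::comm_ring_1 mpoly)"
  apply (rule poly_mapping_eqI)
  apply (simp add: lookup_sig)
  apply auto
  done

lemma sig_polys_in: "sig {j. j \<ge> n} p \<in> polys_in n"
  unfolding polys_in_def
proof (intro CollectI ballI)
  fix m assume "m \<in> Poly_Mapping.keys (sig {j. j \<ge> n} p)"
  then have "Poly_Mapping.keys m \<inter> {j. j \<ge> n} = {}"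
    by (auto simp: in_keys_iff lookup_sig split: if_splits)
  then show "Poly_Mapping.keys m \<subseteq> {..<n}" by auto
qed

lemma sig_polys_id:
  assumes "p \<in> polys_in n" shows "sig {j. j \<ge> n} p = p"
proof (rule sig_id, intro ballI)
  fix m assume "m \<in> Poly_Mapping.keys p"
  then have s: "Poly_Mapping.keys m \<subseteq> {..<n}" using assms by (simp add: polys_in_def)
  show "Poly_Mapping.keys m \<inter> {j. j \<ge> n} = {}"
  proof (rule ccontr)
    assume "Poly_Mapping.keys m \<inter> {j. j \<ge> n} \<noteq> {}"
    then obtain x where "x \<in> Poly_Mapping.keys m" "x \<ge> n" by blast
    then show False using s by auto
  qed
qed

lemma sig_diff_Var: "\<exists>c. p - sig {i} p = Var i * (c :: 'k::comm_ring_1 mpoly)"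
proof (induction p rule: pm_induct)
  case 1 then show ?case by (simp add: rhom_0[OF rhom_sig]) (rule exI[of _ 0], simp)
next
  case (2 m a)
  show ?case
  proof (cases "i \<in> Poly_Mapping.keys m")
    case True
    have "m = Poly_Mapping.single i 1 + (m - Poly_Mapping.single i 1)"
      by (rule poly_mapping_eqI) (use True in \<open>auto simp: lookup_add lookup_minus lookup_single when_def in_keys_iff\<close>)
    then have "Poly_Mapping.single m a = Var i * Poly_Mapping.single (m - Poly_Mapping.single i 1) (a :: 'k)"
      by (metis Var_def mult_single mult_1)
    moreover have "sig {i} (Poly_Mapping.single m a) = (0 :: 'k mpoly)" using True by (simp add: sig_single)
    ultimately show ?thesis by (metis diff_zero)
  next
    case False then show ?thesis by (auto simp: sig_single intro: exI[of _ 0])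
  qed
next
  case (3 p q)
  then obtain c1 c2 where "p - sig {i} p = Var i * c1" "q - sig {i} q = Var i * c2" by blast
  then have "(p + q) - sig {i} (p + q) = Var i * (c1 + c2)"
    by (simp add: rhom_add[OF rhom_sig] algebra_simps)
  then show ?case by blast
qed

lemma fermat_fs: "fermat_poly S = fs {..<length S} (\<lambda>j. S ! j)"
  by (simp add: fermat_poly_def fs_def)

lemma sig_fs:
  assumes "finite T" "\<forall>j\<in>T \<inter> V. a j \<ge> 1"
  shows "sig V (fs T a :: 'k::comm_ring_1 mpoly) = fs (T - V) a"
proof -
  have "sig V (fs T a :: 'k mpoly) = (\<Sum>j\<in>T. (if j \<in> V then 0 else Var j) ^ a j)"
    by (simp add: fs_def rhom_sum[OF rhom_sig] rhom_power[OF rhom_sig] sig_Var)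
  also have "\<dots> = (\<Sum>j\<in>T. if j \<notin> V then Var j ^ a j else 0)"
  proof (rule sum.cong[OF refl])
    fix x assume x: "x \<in> T"
    show "(if x \<in> V then 0 else Var x) ^ a x = (if x \<notin> V then (Var x :: 'k mpoly) ^ a x else 0)"
    proof (cases "x \<in> V")
      case True then have "1 \<le> a x" using assms(2) x by blast
      then show ?thesis using True by (simp add: power_0_left)
    qed simp
  qed
  also have "\<dots> = (\<Sum>j\<in>{j\<in>T. j \<notin> V}. Var j ^ a j)"
    by (simp add: sum.inter_filter[OF assms(1)])
  also have "{j\<in>T. j \<notin> V} = T - V" by auto
  finally show ?thesis by (simp add: fs_def)
qed

lemma qdvd_Var_D:
  fixes A :: "'k::comm_ring_1 mpoly"
  assumes S: "\<forall>j<length S. S!j \<ge> 1" and i: "i < length S"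
    and q: "qdvd (length S) (fermat_poly S) (Var i) A"
  shows "fs ({..<length S} - {i}) (\<lambda>j. S!j) dvd sig {i} A"
proof -
  from q obtain c g where "A - Var i * c = fermat_poly S * g"
    by (auto simp: qdvd_def in_ideal_def)
  then have "sig {i} (A - Var i * c) = sig {i} (fermat_poly S * g)" by simp
  moreover have "sig {i} (fermat_poly S :: 'k mpoly) = fs ({..<length S} - {i}) (\<lambda>j. S!j)"
    unfolding fermat_fs by (rule sig_fs) (use S in auto)
  ultimately have "sig {i} A = fs ({..<length S} - {i}) (\<lambda>j. S!j) * sig {i} g"
    by (simp add: rhom_diff[OF rhom_sig] rhom_mult[OF rhom_sig] sig_Var)
  then show ?thesis by simp
qed

lemma qdvd_Var_I:
  fixes A :: "'k::comm_ring_1 mpoly"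
  assumes S: "\<forall>j<length S. S!j \<ge> 1" and i: "i < length S" and A: "A \<in> polys_in (length S)"
    and dv: "fs ({..<length S} - {i}) (\<lambda>j. S!j) dvd sig {i} A"
  shows "qdvd (length S) (fermat_poly S) (Var i) A"
proof -
  define n where "n = length S"
  define V where "V = {j. j \<ge> n}"
  define a where "a = (\<lambda>j. S ! j)"
  define f0 :: "'k mpoly" where "f0 = fs ({..<n} - {i}) a"
  define f :: "'k mpoly" where "f = fermat_poly S"
  have ff: "f = Var i ^ a i + f0"
    unfolding f_def f0_def fermat_fs n_def a_def fs_def using i by (simp add: sum.remove)
  have "sig V f0 = fs (({..<n} - {i}) - V) a" unfolding f0_def by (rule sig_fs) (auto simp: V_def)
  moreover have "({..<n} - {i}) - V = {..<n} - {i}" by (auto simp: V_def)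
  ultimately have sVf0: "sig V f0 = f0" by (simp add: f0_def)
  have fe: "f = fs {..<n} a" unfolding f_def fermat_fs n_def a_def ..
  have "sig V f = fs ({..<n} - V) a" unfolding fe by (rule sig_fs) (auto simp: V_def)
  moreover have "{..<n} - V = {..<n}" by (auto simp: V_def)
  ultimately have sVf: "sig V f = f" by (simp add: fe)
  have sVA: "sig V A = A" using A unfolding V_def n_def by (rule sig_polys_id)
  have sVi: "sig V (Var i) = Var i" using i by (simp add: sig_Var V_def n_def)
  from dv obtain h where h: "sig {i} A = f0 * h" unfolding f0_def n_def a_def by (elim dvdE)
  define h' where "h' = sig V h"
  have h'P: "h' \<in> polys_in n" unfolding h'_def V_def by (rule sig_polys_in)
  have sVh': "sig V h' = h'" unfolding h'_def by (simp add: sig_sig)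
  have "sig V (sig {i} A) = sig {i} (sig V A)" by (simp add: sig_sig Un_commute)
  then have "sig V (sig {i} A) = sig {i} A" using sVA by simp
  then have h2: "sig {i} A = f0 * h'"
    using h by (simp add: rhom_mult[OF rhom_sig] sVf0 h'_def)
  obtain c where c: "A - sig {i} A = Var i * c" using sig_diff_Var by blast
  obtain k where k: "a i = Suc k" using S i unfolding a_def by (cases "S ! i") auto
  define C0 where "C0 = c - Var i ^ k * h'"
  have eq: "A - Var i * C0 = f * h'"
  proof -
    have "A - Var i * C0 = (A - Var i * c) + Var i ^ a i * h'"
      by (simp add: C0_def k algebra_simps)
    also have "\<dots> = f * h'" using c h2 ff by (simp add: algebra_simps)
    finally show ?thesis .
  qed
  then have "sig V (A - Var i * C0) = sig V (f * h')" by simp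
  then have eq2: "A - Var i * sig V C0 = f * h'"
    by (simp add: rhom_diff[OF rhom_sig] rhom_mult[OF rhom_sig] sVA sVi sVf sVh')
  have "sig V C0 \<in> polys_in n" unfolding V_def by (rule sig_polys_in)
  then show ?thesis using eq2 h'P unfolding qdvd_def in_ideal_def f_def n_def by blast
qed

lemma three_elems:
  assumes "finite A" "card A \<ge> 3"
  shows "\<exists>x y z. x \<in> A \<and> y \<in> A \<and> z \<in> A \<and> x \<noteq> y \<and> x \<noteq> z \<and> y \<noteq> z"
proof -
  have "A \<noteq> {}" using assms by auto
  then obtain x where x: "x \<in> A" by blast
  have c1: "card (A - {x}) \<ge> 2" using assms x by (simp add: card_Diff_singleton)
  have "A - {x} \<noteq> {}"
  proof
    assume h: "A - {x} = {}"
    have "card (A - {x}) = 0" by (simp only: h card.empty)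
    then show False using c1 by simp
  qed
  then obtain y where y: "y \<in> A - {x}" by blast
  have "card (A - {x} - {y}) \<ge> 1" using c1 y assms by (simp add: card_Diff_singleton)
  then have "A - {x} - {y} \<noteq> {}" by (intro notI) simp
  then obtain z where z: "z \<in> A - {x} - {y}" by blast
  show ?thesis using x y z by blast
qed

lemma Var_nz: "(Var i :: 'k::field mpoly) \<noteq> 0"
proof
  assume "(Var i :: 'k mpoly) = 0"
  then have "Poly_Mapping.lookup (Var i :: 'k mpoly) (Poly_Mapping.single i 1) = 0" by simp
  then show False by (simp add: Var_def)
qed

lemma Var_polys: "i < n \<Longrightarrow> (Var i :: 'k::field mpoly) \<in> polys_in n"
  by (simp add: polys_in_def Var_def)

lemma one_polys: "(1 :: 'k::field mpoly) \<in> polys_in n"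
  by (simp add: polys_in_def)

theorem prime_nonassoc:
  fixes S :: "nat list"
  assumes n4: "length S \<ge> 4" and pos: "\<forall>i<length S. S!i > 0" and i: "i < length S"
  shows "qprime (length S) (fermat_poly S) (Var i :: 'k::field_char_0 mpoly)"
    and "\<And>j. j < length S \<Longrightarrow> j \<noteq> i \<Longrightarrow> \<not> qassoc (length S) (fermat_poly S) (Var i :: 'k mpoly) (Var j)"
proof -
  define n where "n = length S"
  define a where "a = (\<lambda>j. S ! j)"
  define T where "T = {..<n} - {i}"
  have S1: "\<forall>j<length S. S!j \<ge> 1" using pos by (simp add: Suc_le_eq)
  have aT: "\<forall>j\<in>T. a j \<ge> 1" using S1 by (auto simp: T_def a_def n_def)
  have an: "\<forall>j\<in>{..<n}. a j \<ge> 1" using S1 by (auto simp: a_def n_def)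
  have fT: "finite T" by (simp add: T_def)
  have "card T = n - 1" using i by (simp add: T_def n_def card_Diff_singleton)
  then have "card T \<ge> 3" using n4 by (simp add: n_def)
  then obtain y z w where yzw: "y \<in> T" "z \<in> T" "w \<in> T" "y \<noteq> z" "y \<noteq> w" "z \<noteq> w"
    using three_elems[OF fT] by blast
  have fe: "fermat_poly S = fs {..<n} a" by (simp add: fermat_fs n_def a_def)
  have yi: "y \<noteq> i" "y < n" using yzw by (auto simp: T_def)
  show "qprime (length S) (fermat_poly S) (Var i :: 'k mpoly)"
    unfolding qprime_def
  proof (intro conjI ballI impI)
    show "(Var i :: 'k mpoly) \<in> polys_in (length S)" using i by (rule Var_polys)
    show "\<not> in_ideal (length S) (fermat_poly S) (Var i :: 'k mpoly)"
    proof
      assume "in_ideal (length S) (fermat_poly S) (Var i :: 'k mpoly)"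
      then have "fs {..<n} a dvd (Var i :: 'k mpoly)" by (auto simp: in_ideal_def fe)
      moreover have "\<not> fs {..<n} a dvd (Var i :: 'k mpoly)"
        by (rule fs_not_dvd) (use yi an Var_nz in \<open>auto simp: psi_Var\<close>)
      ultimately show False by blast
    qed
    show "\<not> qdvd (length S) (fermat_poly S) (Var i) (1 :: 'k mpoly)"
    proof
      assume "qdvd (length S) (fermat_poly S) (Var i) (1 :: 'k mpoly)"
      then have "fs T a dvd sig {i} (1 :: 'k mpoly)"
        unfolding T_def n_def a_def by (rule qdvd_Var_D[OF S1 i])
      then have "fs T a dvd (1 :: 'k mpoly)" by (simp add: rhom_1[OF rhom_sig])
      moreover have "\<not> fs T a dvd (1 :: 'k mpoly)"
        by (rule fs_not_dvd) (use yzw fT aT in \<open>auto simp: rhom_1[OF rhom_psi]\<close>)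
      ultimately show False by blast
    qed
    fix A B :: "'k mpoly"
    assume A: "A \<in> polys_in (length S)" and B: "B \<in> polys_in (length S)"
      and q: "qdvd (length S) (fermat_poly S) (Var i) (A * B)"
    have "fs T a dvd sig {i} (A * B)"
      unfolding T_def n_def a_def by (rule qdvd_Var_D[OF S1 i q])
    then have "fs T a dvd sig {i} A * sig {i} B" by (simp add: rhom_mult[OF rhom_sig])
    have T3: "T - {y, z} \<noteq> {}" using yzw by auto
    from \<open>fs T a dvd sig {i} A * sig {i} B\<close> have "fs T a dvd sig {i} A \<or> fs T a dvd sig {i} B"
      by (rule fs_prime[OF fT yzw(1,2,4) T3 aT])
    then show "qdvd (length S) (fermat_poly S) (Var i) A \<or> qdvd (length S) (fermat_poly S) (Var i) B"
      using qdvd_Var_I[OF S1 i A] qdvd_Var_I[OF S1 i B] unfolding T_def n_def a_def by blast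
  qed
  fix j assume j: "j < length S" "j \<noteq> i"
  show "\<not> qassoc (length S) (fermat_poly S) (Var i :: 'k mpoly) (Var j)"
  proof
    assume "qassoc (length S) (fermat_poly S) (Var i :: 'k mpoly) (Var j)"
    then have "qdvd (length S) (fermat_poly S) (Var i :: 'k mpoly) (Var j)" by (simp add: qassoc_def)
    then have "fs T a dvd sig {i} (Var j :: 'k mpoly)"
      unfolding T_def n_def a_def by (rule qdvd_Var_D[OF S1 i])
    then have d: "fs T a dvd (Var j :: 'k mpoly)" using j by (simp add: sig_Var)
    obtain l where l: "l \<in> T" "l \<noteq> j" using yzw by blast
    have "\<not> fs T a dvd (Var j :: 'k mpoly)"
      by (rule fs_not_dvd) (use l fT aT Var_nz in \<open>auto simp: psi_Var\<close>)
    then show False using d by blast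
  qed
qed

lemma gcd_div_lcm:
  fixes L :: nat
  assumes fin: "finite A" and ne: "A \<noteq> {}" and nz: "0 \<notin> A" and dv: "\<forall>x\<in>A. x dvd L" and L: "L > 0"
  shows "Gcd ((\<lambda>x. L div x) ` A) = L div Lcm A"
proof -
  define M where "M = Lcm A"
  define G where "G = Gcd ((\<lambda>x. L div x) ` A)"
  have MdL: "M dvd L" unfolding M_def by (rule Lcm_least) (use dv in auto)
  have M0: "M > 0" using MdL L by (metis dvd_0_left_iff gr0I)
  have d1: "L div M dvd G" unfolding G_def
  proof (rule Gcd_greatest)
    fix b assume "b \<in> (\<lambda>x. L div x) ` A"
    then obtain x where x: "x \<in> A" "b = L div x" by blast
    have "x dvd M" unfolding M_def using x by (simp add: dvd_Lcm)
    then obtain k where k: "M = x * k" by (elim dvdE)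
    obtain t where t: "L = M * t" using MdL by (elim dvdE)
    have x0: "x > 0" using nz x by (metis gr0I)
    have "L div M = t" using t M0 by simp
    moreover have "L div x = k * t" using t k x0 by (simp add: mult.assoc)
    ultimately show "L div M dvd b" using x by simp
  qed
  obtain x0 where x0: "x0 \<in> A" using ne by blast
  have x0p: "x0 > 0" using nz x0 by (metis gr0I)
  have Gd: "G dvd L div x0" unfolding G_def by (rule Gcd_dvd) (use x0 in auto)
  have Lx0: "L div x0 > 0" using dv x0 x0p L by (metis dvd_div_eq_0_iff gr0I less_numeral_extra(3))
  have G0: "G > 0" using Gd Lx0 by (metis dvd_0_left_iff gr0I less_numeral_extra(3))
  have "L div x0 dvd L" using dv x0 by (metis dvd_div_mult_self dvd_triv_left)
  then have "G dvd L" using Gd by (rule dvd_trans[rotated])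
  then obtain u where u: "L = G * u" by (elim dvdE)
  have "M dvd u" unfolding M_def
  proof (rule Lcm_least)
    fix x assume x: "x \<in> A"
    have "G dvd L div x" unfolding G_def by (rule Gcd_dvd) (use x in auto)
    then have "G * x dvd (L div x) * x" by (rule mult_dvd_mono) simp
    also have "(L div x) * x = L" using dv x by simp
    finally have "G * x dvd G * u" using u by simp
    then show "x dvd u" using G0 by simp
  qed
  then obtain v where v: "u = M * v" by (elim dvdE)
  have "L div M = G * v" using u v M0 by (simp add: mult.commute mult.left_commute)
  then have d2: "G dvd L div M" by simp
  show ?thesis using d1 d2 unfolding G_def M_def by (simp add: dvd_antisym)
qed

lemma set_omit: "i < length S \<Longrightarrow> set S = insert (S ! i) (set (omit i S))"
  unfolding omit_def by (metis id_take_nth_drop set_append list.set(2) Un_insert_right Un_insert_left insert_commute set_append)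

lemma omit_map: "omit i (map f S) = map f (omit i S)"
  by (simp add: omit_def take_map drop_map)

lemma length_omit: "i < length S \<Longrightarrow> length (omit i S) = length S - 1"
  by (simp add: omit_def)

theorem numth:
  fixes S :: "nat list"
  assumes n4: "length S \<ge> 4" and pos: "\<forall>i<length S. S!i > 0"
  defines "d \<equiv> dtuple S"
  shows "tgcd d = 1"
    and "\<And>i. i < length S \<Longrightarrow> (tgcd (omit i d) \<noteq> 1 \<longleftrightarrow> tlcm (omit i S) \<noteq> tlcm S)"
    and "\<And>i. i < length S \<Longrightarrow> (tlcm (omit i S) \<noteq> tlcm S \<longleftrightarrow> i \<in> J S)"
    and "ttype d = cotype S"
proof -
  define L where "L = tlcm S"
  have nz: "0 \<notin> set S" using pos by (auto simp: in_set_conv_nth)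
  have "Lcm (set S) \<noteq> 0"
  proof
    assume "Lcm (set S) = 0"
    then have "0 \<in> set S" using Lcm_0_iff[of "set S"] by blast
    then show False using nz by blast
  qed
  then have L0: "L > 0" unfolding L_def tlcm_def by (metis gr0I)
  have dvL: "\<forall>x\<in>set S. x dvd L" unfolding L_def tlcm_def by (simp add: dvd_Lcm)
  have dmap: "d = map (\<lambda>x. L div x) S" unfolding d_def dtuple_def L_def ..
  have ne: "set S \<noteq> {}" using n4 by auto
  have "Gcd ((\<lambda>x. L div x) ` set S) = L div Lcm (set S)"
    by (rule gcd_div_lcm[OF _ ne nz dvL L0]) simp
  also have "\<dots> = L div L" by (simp add: L_def tlcm_def)
  also have "\<dots> = 1" using L0 by simp
  finally show g1: "tgcd d = 1" unfolding tgcd_def dmap by simp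
  have key: "tgcd (omit i d) \<noteq> 1 \<longleftrightarrow> tlcm (omit i S) \<noteq> tlcm S" if i: "i < length S" for i
  proof -
    define L' where "L' = tlcm (omit i S)"
    have sub: "set (omit i S) \<subseteq> set S" using set_omit[OF i] by auto
    have "length (omit i S) > 0" using n4 length_omit[OF i] by simp
    then have ne': "set (omit i S) \<noteq> {}" by auto
    have nz': "0 \<notin> set (omit i S)" using nz sub by auto
    have dvL': "\<forall>x\<in>set (omit i S). x dvd L" using dvL sub by auto
    have tg: "tgcd (omit i d) = L div L'"
      unfolding tgcd_def dmap omit_map L'_def tlcm_def
      using gcd_div_lcm[OF _ ne' nz' dvL' L0] by simp
    have L'L: "L' dvd L" unfolding L'_def L_def tlcm_def by (rule Lcm_subset[OF sub])
    have "tgcd (omit i d) = 1 \<longleftrightarrow> L' = L"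
    proof
      assume "tgcd (omit i d) = 1"
      then have "L div L' = 1" using tg by simp
      then show "L' = L" using dvd_mult_div_cancel[OF L'L] by simp
    next
      assume "L' = L"
      then show "tgcd (omit i d) = 1" using tg L0 by simp
    qed
    then show ?thesis unfolding L'_def L_def by simp
  qed
  show "tgcd (omit i d) \<noteq> 1 \<longleftrightarrow> tlcm (omit i S) \<noteq> tlcm S" if "i < length S" for i
    using key[OF that] .
  have key2: "tlcm (omit i S) \<noteq> tlcm S \<longleftrightarrow> i \<in> J S" if i: "i < length S" for i
  proof -
    have "tlcm S = lcm (S ! i) (tlcm (omit i S))"
      unfolding tlcm_def by (subst set_omit[OF i]) simp
    then have "S!i dvd tlcm (omit i S) \<longleftrightarrow> tlcm S = tlcm (omit i S)" by simp
    then show ?thesis using i unfolding J_def by auto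
  qed
  show "tlcm (omit i S) \<noteq> tlcm S \<longleftrightarrow> i \<in> J S" if "i < length S" for i
    using key2[OF that] .
  have "Jstar d = J S"
  proof -
    have "Jstar d = {i. i < length S \<and> tgcd (omit i d) \<noteq> 1}"
      unfolding Jstar_def g1 by (simp add: dmap)
    also have "\<dots> = {i. i < length S \<and> i \<in> J S}" using key key2 by blast
    also have "\<dots> = J S" by (auto simp: J_def)
    finally show ?thesis .
  qed
  then show "ttype d = cotype S" by (simp add: ttype_def cotype_def)
qed

lemma whomog_fermat:
  assumes pos: "\<forall>i<length S. S!i > 0"
  shows "whomog (\<lambda>j. dtuple S ! j) (tlcm S) (fermat_poly S :: 'k::field mpoly)"
  unfolding whomog_def
proof
  fix m assume m: "m \<in> Poly_Mapping.keys (fermat_poly S :: 'k mpoly)"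
  have fin: "finite {..<length S}" by simp
  have a1: "\<forall>j\<in>{..<length S}. S ! j \<ge> 1" using pos by (auto simp: Suc_le_eq)
  have "Poly_Mapping.lookup (fermat_poly S :: 'k mpoly) m =
        (if \<exists>j\<in>{..<length S}. m = Poly_Mapping.single j (S ! j) then 1 else 0)"
    unfolding fermat_fs by (rule lookup_fs[OF fin a1])
  then obtain j where j: "j < length S" "m = Poly_Mapping.single j (S ! j)"
    using m by (auto simp: in_keys_iff split: if_splits)
  have sj: "S ! j \<noteq> 0" using pos j by auto
  have dvd: "S ! j dvd tlcm S" unfolding tlcm_def using j by (simp add: dvd_Lcm)
  have "(\<Sum>i\<in>Poly_Mapping.keys m. Poly_Mapping.lookup m i * dtuple S ! i) = S ! j * (tlcm S div S ! j)"
    using j sj by (simp add: dtuple_def)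
  also have "\<dots> = tlcm S" using dvd by simp
  finally show "(\<Sum>i\<in>Poly_Mapping.keys m. Poly_Mapping.lookup m i * dtuple S ! i) = tlcm S" .
qed

lemma whomog_Var: "whomog w (w i) (Var i :: 'k::field mpoly)"
  by (simp add: whomog_def Var_def)

theorem lemma4p3:
  fixes S :: "nat list" and n :: nat
  assumes n: "length S = n" and n4: "n \<ge> 4"
    and pos: "\<forall>i < n. S ! i > 0"
  defines "d \<equiv> dtuple S"
  shows "(tgcd d = 1 \<and> ttype d = cotype S)
    \<and> (\<forall>i < n. (tgcd (omit i d) \<noteq> 1 \<longleftrightarrow> tlcm (omit i S) \<noteq> tlcm S)
                 \<and> (tlcm (omit i S) \<noteq> tlcm S \<longleftrightarrow> i \<in> J S))
    \<and> (whomog (\<lambda>j. d ! j) (tlcm S) (fermat_poly S :: 'k::field_char_0 mpoly)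
         \<and> (\<forall>i < n. whomog (\<lambda>j. d ! j) (d ! i) (Var i :: 'k mpoly)
                    \<and> qprime n (fermat_poly S) (Var i :: 'k mpoly))
         \<and> (\<forall>i < n. \<forall>j < n. i \<noteq> j \<longrightarrow>
                 \<not> qassoc n (fermat_poly S) (Var i :: 'k mpoly) (Var j)))"
proof -
  have len: "length S \<ge> 4" using n n4 by simp
  have pos': "\<forall>i<length S. S!i > 0" using n pos by simp
  note N = numth[OF len pos']
  have A: "tgcd d = 1 \<and> ttype d = cotype S" using N(1) N(4) unfolding d_def by simp
  have B: "\<forall>i < n. (tgcd (omit i d) \<noteq> 1 \<longleftrightarrow> tlcm (omit i S) \<noteq> tlcm S)
                 \<and> (tlcm (omit i S) \<noteq> tlcm S \<longleftrightarrow> i \<in> J S)"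
    using N(2) N(3) n unfolding d_def by simp
  have C1: "whomog (\<lambda>j. d ! j) (tlcm S) (fermat_poly S :: 'k::field_char_0 mpoly)"
    unfolding d_def by (rule whomog_fermat[OF pos'])
  have C2: "\<forall>i < n. whomog (\<lambda>j. d ! j) (d ! i) (Var i :: 'k mpoly)
                    \<and> qprime n (fermat_poly S) (Var i :: 'k mpoly)"
    using whomog_Var prime_nonassoc(1)[OF len pos'] n by blast
  have C3: "\<forall>i < n. \<forall>j < n. i \<noteq> j \<longrightarrow>
                 \<not> qassoc n (fermat_poly S) (Var i :: 'k mpoly) (Var j)"
    using prime_nonassoc(2)[OF len pos'] n by blast
  show ?thesis using A B C1 C2 C3 by blast
qed

end
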